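(* Let $A\in\mathbb{R}^{n\times n}$, $B=I$, $m,c_0\in\mathbb{R}^n$, $r>0$, $r_0>0$. Let $p_1,\dots,p_N$ be the generating unit vectors of a $\tfrac{\sqrt3}{2}$-SVP, with maximum alignment $\eta=\max_{i\ne j}\langle p_i,p_j\rangle$, and set $D=\max_{1\le k\le N}\|A^{k+1}-I\|_2$. Suppose \[ r_0\le\frac{r(1-\eta)}{D(3-\eta)} \] and $x_0\in\mathcal{B}(m,r)\cap\mathcal{B}(c_0,r_0)$. Let $u_0\in\mathbb{R}^n$ be arbitrary and define recursively, for $i=1,\dots,N$, \[ u_i=\big(r-\|A^{i+1}-I\|_2\,r_0\big)p_i-(A^{i+1}-I)c_0-\sum_{j=0}^{i-1}A^{i-j}u_j , \] and let $x_{k+1}=Ax_k+u_k$. Then there exists $i\in\{1,\dots,N\}$ with $x_{i+1}\in\mathcal{B}(m,r)$.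
   Context: $\|\cdot\|_2$ denotes the Euclidean norm and the induced operator norm; $\mathcal{B}(x,r)$ is the closed Euclidean ball; $\mathbb{S}^{n-1}$ the unit sphere. A $\tfrac{\sqrt3}{2}$-SVP is generated by unit vectors $p_1,\dots,p_N\in\mathbb{S}^{n-1}$ such that the open caps $C(p_i,\tfrac{\sqrt3}{2})=\{w\in\mathbb{S}^{n-1}:\langle p_i,w\rangle>\tfrac{\sqrt3}{2}\}$ cover $\mathbb{S}^{n-1}$, with $N$ the smallest integer for which such a covering exists (necessarily $N\ge2$). The corresponding spherical Voronoi partition of a sphere $\partial\mathcal{B}(c,\rho)$ has cells $R_i=\{x:\|x-c\|=\rho,\ \langle x-c,p_i\rangle\ge\langle x-c,p_j\rangle\ \forall j\ne i\}$. *)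

theory Defs
  imports "HOL-Analysis.Analysis"
begin

text \<open>Matrix power (the built-in power on vec types is componentwise, so we define it).\<close>
primrec matpow :: "real^'n^'n \<Rightarrow> nat \<Rightarrow> real^'n^'n" where
  "matpow A 0 = mat 1"
| "matpow A (Suc k) = A ** matpow A k"

definition opnorm2 :: "real^'n^'n \<Rightarrow> real" where
  "opnorm2 M = onorm (\<lambda>v. M *v v)"

definition caps_cover :: "nat \<Rightarrow> (nat \<Rightarrow> real^'n) \<Rightarrow> bool" where
  "caps_cover N p \<longleftrightarrow>
     (\<forall>i\<in>{1..N}. norm (p i) = 1) \<and>
     (\<forall>w::real^'n. norm w = 1 \<longrightarrow> (\<exists>i\<in>{1..N}. p i \<bullet> w > sqrt 3 / 2))"

definition is_SVP :: "nat \<Rightarrow> (nat \<Rightarrow> real^'n) \<Rightarrow> bool" where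
  "is_SVP N p \<longleftrightarrow> caps_cover N p \<and>
     (\<forall>M (q::nat \<Rightarrow> real^'n). caps_cover M q \<longrightarrow> N \<le> M)"

end

theory Submission
  imports Defs
begin


lemma xformula:
  fixes A :: "real^'n^'n" and u x :: "nat \<Rightarrow> real^'n"
  assumes "\<forall>k. x (Suc k) = A *v x k + u k"
  shows "x k = matpow A k *v x 0 + (\<Sum>j<k. matpow A (k - 1 - j) *v u j)"
proof (induction k)
  case 0 then show ?case by simp
next
  case (Suc k)
  have "x (Suc k) = A *v x k + u k" using assms by simp
  also have "\<dots> = matpow A (Suc k) *v x 0 + (\<Sum>j<k. matpow A (Suc k - 1 - j) *v u j) + u k"
  proof -
    have "A *v (\<Sum>j<k. matpow A (k - 1 - j) *v u j) = (\<Sum>j<k. A *v (matpow A (k - 1 - j) *v u j))"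
      by (simp add: linear_sum[OF matrix_vector_mul_linear])
    also have "\<dots> = (\<Sum>j<k. matpow A (Suc k - 1 - j) *v u j)"
    proof (rule sum.cong)
      fix j assume "j \<in> {..<k}"
      then have "Suc k - 1 - j = Suc (k - 1 - j)" by auto
      then show "A *v (matpow A (k - 1 - j) *v u j) = matpow A (Suc k - 1 - j) *v u j"
        by (simp add: matrix_vector_mul_assoc)
    qed simp
    finally show ?thesis using Suc by (simp add: matrix_vector_right_distrib matrix_vector_mul_assoc)
  qed
  also have "\<dots> = matpow A (Suc k) *v x 0 + (\<Sum>j<Suc k. matpow A (Suc k - 1 - j) *v u j)"
    by simp
  finally show ?case .
qed

lemma unit_exists: "\<exists>w::real^'n. norm w = 1"
  using norm_axis_1 by blast

lemma two_idx:
  fixes p :: "nat \<Rightarrow> real^'n"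
  assumes "caps_cover N p"
  shows "\<exists>i j. i \<in> {1..N} \<and> j \<in> {1..N} \<and> i \<noteq> j"
proof -
  obtain w :: "real^'n" where w: "norm w = 1" using unit_exists by blast
  then obtain i where i: "i \<in> {1..N}" using assms unfolding caps_cover_def by blast
  have ni: "norm (p i) = 1" using assms i unfolding caps_cover_def by blast
  then have "norm (- p i) = 1" by simp
  then obtain j where j: "j \<in> {1..N}" "p j \<bullet> (- p i) > sqrt 3 / 2" using assms unfolding caps_cover_def by blast
  have "i \<noteq> j"
  proof
    assume "i = j"
    then have "p j \<bullet> (- p i) = - 1" using ni by (simp add: dot_square_norm)
    moreover have "sqrt 3 / 2 \<ge> (0::real)" by simp
    ultimately show False using j(2) by linarith
  qed
  with i j show ?thesis by blast
qed

lemma far_pair: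
  fixes p :: "nat \<Rightarrow> real^'n" and u :: "real^'n"
  assumes cov: "caps_cover N p" and i: "i \<in> {1..N}" and nu: "norm u = 1"
    and ne: "p i \<noteq> u" and pu: "p i \<bullet> u > sqrt 3 / 2"
  shows "\<exists>j\<in>{1..N}. j \<noteq> i \<and> p j \<bullet> p i > - 1/50"
proof -
  define P where "P = p i"
  have nP: "norm P = 1" using cov i unfolding caps_cover_def P_def by blast
  define c where "c = P \<bullet> u"
  define q0 where "q0 = u - c *\<^sub>R P"
  have PP: "P \<bullet> P = 1" using nP by (simp add: dot_square_norm)
  have q0P: "q0 \<bullet> P = 0" unfolding q0_def c_def by (simp add: inner_diff_left PP inner_commute[of u P])
  have "q0 \<noteq> 0"
  proof
    assume "q0 = 0"
    then have uc: "u = c *\<^sub>R P" by (simp add: q0_def)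
    then have "\<bar>c\<bar> = 1" using nu nP by simp
    moreover have "0 \<le> c"
    proof -
      have "sqrt 3 / 2 \<ge> (0::real)" by simp
      then show ?thesis using pu unfolding c_def P_def by linarith
    qed
    ultimately have "c = 1" by simp
    then show False using uc ne P_def by simp
  qed
  define q where "q = q0 /\<^sub>R norm q0"
  have nq: "norm q = 1" using \<open>q0 \<noteq> 0\<close> by (simp add: q_def)
  have qP: "q \<bullet> P = 0" using q0P by (simp add: q_def)
  define w where "w = (1/2) *\<^sub>R P + (sqrt 3 / 2) *\<^sub>R q"
  have qq: "q \<bullet> q = 1" using nq by (simp add: dot_square_norm)
  have "w \<bullet> w = (1/2)^2 * (P \<bullet> P) + 2*((1/2)*(sqrt 3/2)) * (q \<bullet> P) + (sqrt 3/2)^2 * (q \<bullet> q)"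
    unfolding w_def by (simp add: inner_add_left inner_add_right inner_commute[of P q] algebra_simps power2_eq_square)
  also have "\<dots> = 1" using PP qq qP by (simp add: power_divide)
  finally have "w \<bullet> w = 1" .
  then have nw: "norm w = 1" by (simp add: norm_eq_sqrt_inner)
  then obtain j where j: "j \<in> {1..N}" "p j \<bullet> w > sqrt 3 / 2" using cov unfolding caps_cover_def by blast
  have npj: "norm (p j) = 1" using cov j(1) unfolding caps_cover_def by blast
  have Pw: "P \<bullet> w = 1/2" using nP qP unfolding w_def
    by (simp add: inner_add_right dot_square_norm inner_commute)
  have "j \<noteq> i"
  proof
    assume "j = i"
    then have "p j \<bullet> w = 1/2" using Pw P_def by simp
    moreover have "sqrt 3 / 2 > 1/2" by (simp add: real_less_rsqrt)
    ultimately show False using j(2) by simp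
  qed
  have pjpj: "p j \<bullet> p j = 1" using npj by (simp add: dot_square_norm)
  have "(p j - w) \<bullet> (p j - w) = p j \<bullet> p j - 2 * (p j \<bullet> w) + w \<bullet> w"
    by (simp add: inner_diff_left inner_diff_right inner_commute[of w "p j"])
  then have "(norm (p j - w))^2 = 2 - 2 * (p j \<bullet> w)"
    using pjpj \<open>w \<bullet> w = 1\<close> by (simp add: dot_square_norm)
  also have "\<dots> < 2 - sqrt 3" using j(2) by simp
  also have "\<dots> < (13/25)^2"
  proof -
    have "(1.7296::real) < sqrt 3" by (rule real_less_rsqrt) (simp add: power2_eq_square)
    then show ?thesis by (simp add: power2_eq_square)
  qed
  finally have d: "norm (p j - w) < 13/25"
    by (rule power_less_imp_less_base) simp
  have "p j \<bullet> P = w \<bullet> P + (p j - w) \<bullet> P" by (simp add: inner_diff_left)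
  moreover have "\<bar>(p j - w) \<bullet> P\<bar> \<le> norm (p j - w)"
    using Cauchy_Schwarz_ineq2[of "p j - w" P] nP by simp
  ultimately have "p j \<bullet> P > - 1/50" using Pw d by (simp add: inner_commute) 
  then show ?thesis using j(1) \<open>j \<noteq> i\<close> P_def by blast
qed

theorem lemma5p2:
  fixes A :: "real^'n^'n" and m c0 x0 :: "real^'n"
    and r r0 :: real and N :: nat and p u x :: "nat \<Rightarrow> real^'n"
  assumes "r > 0" and "r0 > 0"
    and svp: "is_SVP N p"
    and eta: "\<eta> = Max {p i \<bullet> p j | i j. i \<in> {1..N} \<and> j \<in> {1..N} \<and> i \<noteq> j}"
    and D: "D = Max ((\<lambda>k. opnorm2 (matpow A (k + 1) - mat 1)) ` {1..N})"
    and r0_le: "r0 \<le> r * (1 - \<eta>) / (D * (3 - \<eta>))"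
    and x0: "x0 \<in> cball m r \<inter> cball c0 r0"
    and u: "\<forall>i\<in>{1..N}. u i = (r - opnorm2 (matpow A (i + 1) - mat 1) * r0) *\<^sub>R p i
                 - (matpow A (i + 1) - mat 1) *v c0
                 - (\<Sum>j<i. matpow A (i - j) *v u j)"
    and x_0: "x 0 = x0"
    and x_step: "\<forall>k. x (Suc k) = A *v x k + u k"
  shows "\<exists>i\<in>{1..N}. x (i + 1) \<in> cball m r"
proof -
  have cov: "caps_cover N p" using svp is_SVP_def by blast
  have unit: "\<forall>i\<in>{1..N}. norm (p i) = 1" using cov caps_cover_def by blast
  define S where "S = {p i \<bullet> p j | i j. i \<in> {1..N} \<and> j \<in> {1..N} \<and> i \<noteq> j}"
  have finS: "finite S"
  proof (rule finite_subset)
    show "S \<subseteq> (\<lambda>(i,j). p i \<bullet> p j) ` ({1..N} \<times> {1..N})" unfolding S_def by auto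
  qed simp
  obtain i0 j0 where ij0: "i0 \<in> {1..N}" "j0 \<in> {1..N}" "i0 \<noteq> j0" using two_idx[OF cov] by blast
  have neS: "S \<noteq> {}" using ij0 unfolding S_def by blast
  have etaS: "\<eta> \<in> S" using eta Max_in[OF finS neS] S_def by simp
  have eta_ge: "p i \<bullet> p j \<le> \<eta>" if "i \<in> {1..N}" "j \<in> {1..N}" "i \<noteq> j" for i j
  proof -
    have "p i \<bullet> p j \<in> S" using that unfolding S_def by blast
    then show ?thesis using eta Max_ge[OF finS] S_def by simp
  qed
  obtain ie je where ie: "ie \<in> {1..N}" "je \<in> {1..N}" "\<eta> = p ie \<bullet> p je"
    using etaS unfolding S_def by blast
  have "\<bar>p ie \<bullet> p je\<bar> \<le> norm (p ie) * norm (p je)" by (rule Cauchy_Schwarz_ineq2)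
  then have etaabs: "\<bar>\<eta>\<bar> \<le> 1" using ie unit by simp
  define d where "d k = opnorm2 (matpow A (k+1) - mat 1)" for k
  have d_nonneg: "0 \<le> d k" for k
    unfolding d_def opnorm2_def by (rule onorm_pos_le) simp
  have finD: "finite ((\<lambda>k. opnorm2 (matpow A (k + 1) - mat 1)) ` {1..N})" by simp
  have d_le: "d k \<le> D" if "k \<in> {1..N}" for k
    unfolding D d_def using Max_ge[OF finD] that by blast
  have D0: "D \<ge> 0" using d_le[OF ij0(1)] d_nonneg[of i0] by linarith
  have Dpos: "D > 0"
  proof (rule ccontr)
    assume "\<not> D > 0"
    then have "D = 0" using D0 by simp
    then show False using r0_le \<open>r0 > 0\<close> by simp
  qed
  have eta_lt1: "\<eta> < 1"
  proof (rule ccontr)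
    assume "\<not> \<eta> < 1"
    then have "\<eta> = 1" using etaabs by simp
    then show False using r0_le \<open>r0 > 0\<close> by simp
  qed
  have e3: "3 - \<eta> > 0" using etaabs by simp
  have "D * r0 \<le> D * (r * (1 - \<eta>) / (D * (3 - \<eta>)))"
    by (rule mult_left_mono[OF r0_le]) (use Dpos in simp)
  also have "\<dots> = r * (1 - \<eta>) / (3 - \<eta>)" using Dpos e3 by (simp add: field_simps)
  finally have Dr0: "D * r0 \<le> r * (1 - \<eta>) / (3 - \<eta>)" .
  define v where "v = x0 - m"
  have nv: "norm v \<le> r" using x0 by (simp add: v_def dist_norm norm_minus_commute)
  have nx0c0: "norm (x0 - c0) \<le> r0" using x0 by (simp add: dist_norm norm_minus_commute)
  define s where "s k = r - d k * r0" for k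
  have rr: "r - r * (1 - \<eta>) / (3 - \<eta>) = 2 * r / (3 - \<eta>)" using e3 by (simp add: field_simps)
  have s_low: "s k \<ge> 2 * r / (3 - \<eta>)" if "k \<in> {1..N}" for k
  proof -
    have "d k * r0 \<le> D * r0" using d_le[OF that] \<open>r0 > 0\<close> by (simp add: mult_right_mono)
    then show ?thesis using Dr0 rr unfolding s_def by linarith
  qed
  have tpos: "2 * r / (3 - \<eta>) > 0" using e3 \<open>r > 0\<close> by simp
  have key: "\<exists>i\<in>{1..N}. (norm v)^2 + 2 * s i * (p i \<bullet> v) \<le> 0"
  proof (cases "v = 0")
    case True
    then show ?thesis using ij0(1) by auto
  next
    case False
    define uu where "uu = (- (1 / norm v)) *\<^sub>R v"
    have nuu: "norm uu = 1" using False by (simp add: uu_def)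
    then obtain i where i: "i \<in> {1..N}" "p i \<bullet> uu > sqrt 3 / 2"
      using cov unfolding caps_cover_def by blast
    define c where "c = p i \<bullet> uu"
    have vuu: "v = (- norm v) *\<^sub>R uu" using False by (simp add: uu_def)
    have pv: "p i \<bullet> v = - norm v * c" unfolding c_def by (subst vuu) simp
    have suff: "norm v \<le> 2 * s i * c"
    proof (cases "p i = uu")
      case True
      then have "c = 1" using nuu by (simp add: c_def dot_square_norm)
      have "3 - \<eta> \<le> 4" using etaabs by simp
      then have "2 * r / (3 - \<eta>) \<ge> 2 * r / 4" using e3 \<open>r > 0\<close>
        by (intro divide_left_mono) auto
      then have "2 * s i \<ge> r" using s_low[OF i(1)] by linarith
      then show ?thesis using nv \<open>c = 1\<close> by simp
    next
      case False
      obtain j where j: "j \<in> {1..N}" "j \<noteq> i" "p j \<bullet> p i > - 1/50"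
        using far_pair[OF cov i(1) nuu False i(2)] by blast
      have "\<eta> > - 1/50" using eta_ge[OF j(1) i(1) j(2)] j(3) by linarith
      then have "3 - \<eta> \<le> 151/50" by simp
      then have "2 * r / (3 - \<eta>) \<ge> 2 * r / (151/50)" using e3 \<open>r > 0\<close>
        by (intro divide_left_mono) auto
      then have si: "s i \<ge> 100 * r / 151" using s_low[OF i(1)] by simp
      have "(1.72::real) < sqrt 3" by (rule real_less_rsqrt) (simp add: power2_eq_square)
      then have cc: "c \<ge> 43/50" using i(2) c_def by simp
      have "(100 * r / 151) * (43/50) \<le> s i * c"
        by (rule mult_mono) (use si cc \<open>r > 0\<close> in auto)
      then show ?thesis using nv \<open>r > 0\<close> by simp
    qed
    have "(norm v)^2 + 2 * s i * (p i \<bullet> v) = norm v * (norm v - 2 * s i * c)"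
      by (simp add: pv power2_eq_square algebra_simps)
    also have "\<dots> \<le> 0" using suff by (simp add: mult_nonneg_nonpos)
    finally show ?thesis using i(1) by blast
  qed
  then obtain i where i: "i \<in> {1..N}" and kv: "(norm v)^2 + 2 * s i * (p i \<bullet> v) \<le> 0" by blast
  have si0: "s i \<ge> 0" using s_low[OF i] tpos by simp
  define M where "M = matpow A (i+1)"
  have sumeq: "(\<Sum>j<i+1. matpow A (i + 1 - 1 - j) *v u j) = (\<Sum>j<i. matpow A (i - j) *v u j) + u i"
    by simp
  have xi: "x (i+1) = M *v x0 + (\<Sum>j<i. matpow A (i - j) *v u j) + u i"
    using xformula[OF x_step, of "i+1"] x_0 sumeq unfolding M_def by simp
  have ui: "u i = s i *\<^sub>R p i - (M - mat 1) *v c0 - (\<Sum>j<i. matpow A (i - j) *v u j)"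
    using u i unfolding s_def d_def M_def by simp
  have xm: "x (i+1) - m = (v + s i *\<^sub>R p i) + (M - mat 1) *v (x0 - c0)"
    unfolding xi ui v_def by (simp add: matrix_vector_mult_diff_rdistrib matrix_vector_mult_diff_distrib algebra_simps)
  have pp: "p i \<bullet> p i = 1" using unit i by (simp add: dot_square_norm)
  have "(v + s i *\<^sub>R p i) \<bullet> (v + s i *\<^sub>R p i) = v \<bullet> v + 2 * s i * (p i \<bullet> v) + (s i)^2 * (p i \<bullet> p i)"
    by (simp add: inner_add_left inner_add_right inner_commute[of v "p i"] power2_eq_square algebra_simps)
  also have "\<dots> \<le> (s i)^2" using kv pp dot_square_norm[of v] by simp
  finally have "(norm (v + s i *\<^sub>R p i))^2 \<le> (s i)^2" by (simp add: dot_square_norm)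
  then have n1: "norm (v + s i *\<^sub>R p i) \<le> s i" using si0 by (rule power2_le_imp_le)
  have "norm ((M - mat 1) *v (x0 - c0)) \<le> d i * norm (x0 - c0)"
    unfolding d_def opnorm2_def M_def by (rule onorm) simp
  also have "\<dots> \<le> d i * r0" using nx0c0 d_nonneg by (simp add: mult_left_mono)
  finally have n2: "norm ((M - mat 1) *v (x0 - c0)) \<le> d i * r0" .
  have "norm (x (i+1) - m) \<le> s i + d i * r0"
    unfolding xm using norm_triangle_le[OF add_mono[OF n1 n2]] by simp
  then have "dist m (x (i+1)) \<le> r" unfolding s_def by (simp add: dist_norm norm_minus_commute)
  then show ?thesis using i by auto
qed

end
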